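(* Let $K$ be a real biquadratic field with $\operatorname{sgnrk}(K)\le 3$. Then $N_{K/\mathbb{Q}}(\eta)=1$ for every $\eta\in\mathcal{O}_K^\times$.
   Context: A real biquadratic field is $K=\mathbb{Q}(\sqrt{D_1},\sqrt{D_2})$ of degree $4$ with $D_1,D_2>1$ squarefree integers (so $K$ is totally real). For $\alpha\in K^\times$, $\operatorname{sgn}(\alpha)\in\mathbb{F}_2^4$ records the signs of its four real embeddings ($0$ for positive, $1$ for negative). $\operatorname{sgnrk}(K)$ is the $\mathbb{F}_2$-dimension of the unit signature group $\{\operatorname{sgn}(\eta):\eta\in\mathcal{O}_K^\times\}$. *)

theory Defs
  imports "HOL-Computational_Algebra.Computational_Algebra" Complex_Main
begin

text \<open>A real biquadratic field K = Q(sqrt D1, sqrt D2): D1, D2 > 1 squarefree and distinct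
  (which is exactly the condition for [K:Q] = 4).\<close>
definition real_biquadratic :: "int \<Rightarrow> int \<Rightarrow> bool" where
  "real_biquadratic D1 D2 \<longleftrightarrow> D1 > 1 \<and> D2 > 1 \<and> squarefree D1 \<and> squarefree D2 \<and> D1 \<noteq> D2"

definition sg :: "bool \<Rightarrow> real" where
  "sg b = (if b then 1 else -1)"

text \<open>Elements of K are written uniquely as a + b sqrt D1 + c sqrt D2 + d sqrt D1 sqrt D2 with
  a,b,c,d rational.  The four real embeddings are indexed by (s,t) :: bool \<times> bool, sending
  sqrt D1 to sg s * sqrt D1 and sqrt D2 to sg t * sqrt D2; (True,True) is the identity
  embedding K \<subseteq> \<real>.\<close>
definition bq_emb :: "int \<Rightarrow> int \<Rightarrow> bool \<times> bool \<Rightarrow> rat \<times> rat \<times> rat \<times> rat \<Rightarrow> real" where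
  "bq_emb D1 D2 st q = (case q of (a, b, c, d) \<Rightarrow>
     of_rat a + sg (fst st) * of_rat b * sqrt (of_int D1)
     + sg (snd st) * of_rat c * sqrt (of_int D2)
     + sg (fst st) * sg (snd st) * of_rat d * sqrt (of_int D1) * sqrt (of_int D2))"

definition bq_unit :: "int \<Rightarrow> int \<Rightarrow> rat \<times> rat \<times> rat \<times> rat \<Rightarrow> bool" where
  "bq_unit D1 D2 q \<longleftrightarrow> (let x = bq_emb D1 D2 (True, True) q in
      x \<noteq> 0 \<and> algebraic_int x \<and> algebraic_int (inverse x))"

definition bq_norm :: "int \<Rightarrow> int \<Rightarrow> rat \<times> rat \<times> rat \<times> rat \<Rightarrow> real" where
  "bq_norm D1 D2 q = (\<Prod>st\<in>(UNIV :: (bool \<times> bool) set). bq_emb D1 D2 st q)"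

text \<open>Signature in F_2^4, modelled as a function from the four embeddings to bool
  (True = 1 = negative, False = 0 = positive); addition in F_2^4 is pointwise xor.\<close>
definition bq_sgn :: "int \<Rightarrow> int \<Rightarrow> rat \<times> rat \<times> rat \<times> rat \<Rightarrow> (bool \<times> bool \<Rightarrow> bool)" where
  "bq_sgn D1 D2 q = (\<lambda>st. bq_emb D1 D2 st q < 0)"

definition unit_sgn_group :: "int \<Rightarrow> int \<Rightarrow> (bool \<times> bool \<Rightarrow> bool) set" where
  "unit_sgn_group D1 D2 = bq_sgn D1 D2 ` {q. bq_unit D1 D2 q}"

text \<open>F_2-linear span of a set of vectors in F_2^I: all sums (xor) of finite subsets.\<close>
definition f2_span :: "('i \<Rightarrow> bool) set \<Rightarrow> ('i \<Rightarrow> bool) set" where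
  "f2_span S = {(\<lambda>i. odd (card {v\<in>T. v i})) | T. T \<subseteq> S \<and> finite T}"

definition f2_dim :: "('i \<Rightarrow> bool) set \<Rightarrow> nat" where
  "f2_dim G = (LEAST n. \<exists>S. finite S \<and> card S = n \<and> f2_span S = G)"

definition sgnrk :: "int \<Rightarrow> int \<Rightarrow> nat" where
  "sgnrk D1 D2 = f2_dim (unit_sgn_group D1 D2)"

end

theory Submission
  imports Defs "Jordan_Normal_Form.Char_Poly" "HOL-Library.Cardinality"
begin

lemma eig_alg_int:
  fixes A :: "int mat" and v :: "real vec" and z :: real
  assumes A: "A \<in> carrier_mat n n" and v: "v \<in> carrier_vec n" "v \<noteq> 0\<^sub>v n"
    and ev: "map_mat of_int A *\<^sub>v v = z \<cdot>\<^sub>v v"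
  shows "algebraic_int z"
proof -
  have A': "map_mat (of_int :: int \<Rightarrow> real) A \<in> carrier_mat n n" using A by auto
  have "eigenvalue (map_mat of_int A) z"
    unfolding eigenvalue_def eigenvector_def using v ev A by auto
  hence "poly (char_poly (map_mat of_int A)) z = 0"
    using eigenvalue_root_char_poly[OF A'] by simp
  hence "poly (map_poly of_int (char_poly A)) z = 0"
    using of_int_hom.char_poly_hom[OF A] by (metis)
  moreover have "lead_coeff (char_poly A) = 1"
    using degree_monic_char_poly[OF A] by simp
  ultimately show ?thesis
    unfolding algebraic_int_altdef_ipoly by blast
qed



lemma pow_reduce:
  fixes p :: "int poly" and x :: real
  assumes lc: "lead_coeff p = 1" and root: "poly (map_poly of_int p) x = 0"
    and dg: "degree p = Suc m"
  shows "\<exists>c::nat \<Rightarrow> int. x^k = (\<Sum>a<Suc m. of_int (c a) * x^a)"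
proof (induction k)
  case 0
  show ?case
    by (rule exI[of _ "\<lambda>a. if a = 0 then 1 else 0"], subst sum.lessThan_Suc_shift, simp)
next
  case (Suc k)
  then obtain c where c: "x^k = (\<Sum>a<Suc m. of_int (c a) * x^a)" by blast
  have "poly (map_poly of_int p) x = (\<Sum>i\<le>degree (map_poly (of_int :: int \<Rightarrow> real) p). coeff (map_poly (of_int :: int \<Rightarrow> real) p) i * x^i)"
    by (rule poly_altdef)
  also have "\<dots> = (\<Sum>i<Suc (Suc m). of_int (coeff p i) * x^i)"
    using dg by (simp add: coeff_map_poly lessThan_Suc_atMost)
  also have "\<dots> = (\<Sum>i<Suc m. of_int (coeff p i) * x^i) + x^(Suc m)"
    using lc dg by simp
  finally have xn: "x^(Suc m) = - (\<Sum>i<Suc m. of_int (coeff p i) * x^i)"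
    using root by simp
  have "x^(Suc k) = (\<Sum>a<Suc m. of_int (c a) * x^(Suc a))"
    using c by (simp add: sum_distrib_left algebra_simps)
  also have "\<dots> = (\<Sum>a<m. of_int (c a) * x^(Suc a)) + of_int (c m) * x^(Suc m)"
    by simp
  also have "(\<Sum>a<m. of_int (c a) * x^(Suc a)) = (\<Sum>a<Suc m. of_int (if a = 0 then 0 else c (a - 1)) * x^a)"
    by (subst sum.lessThan_Suc_shift) simp
  finally have "x^(Suc k) = (\<Sum>a<Suc m. of_int ((if a = 0 then 0 else c (a - 1)) - c m * coeff p a) * x^a)"
    unfolding xn by (simp add: algebra_simps sum_distrib_left sum_subtractf)
  thus ?case by (rule exI[of _ "\<lambda>a. (if a = 0 then 0 else c (a - 1)) - c m * coeff p a"])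
qed



lemma sum_div_mod:
  fixes f :: "nat \<Rightarrow> nat \<Rightarrow> 'a::comm_monoid_add"
  assumes "n2 > 0"
  shows "(\<Sum>l<n1*n2. f (l div n2) (l mod n2)) = (\<Sum>a<n1. \<Sum>b<n2. f a b)"
proof -
  have bij: "bij_betw (\<lambda>(a,b). a*n2+b) ({..<n1} \<times> {..<n2}) {..<n1*n2}"
  proof (rule bij_betw_imageI)
    show "inj_on (\<lambda>(a,b). a*n2+b) ({..<n1} \<times> {..<n2})"
    proof (rule inj_onI, clarsimp)
      fix a b a' b' assume "b < n2" "b' < n2" "a*n2+b = a'*n2+b'"
      hence "(a*n2+b) div n2 = (a'*n2+b') div n2" "(a*n2+b) mod n2 = (a'*n2+b') mod n2" by auto
      thus "a = a' \<and> b = b'" using \<open>b < n2\<close> \<open>b' < n2\<close> assms by simp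
    qed
    show "(\<lambda>(a,b). a*n2+b) ` ({..<n1} \<times> {..<n2}) = {..<n1*n2}"
    proof
      show "(\<lambda>(a,b). a*n2+b) ` ({..<n1} \<times> {..<n2}) \<subseteq> {..<n1*n2}"
      proof clarsimp
        fix a b assume "a < n1" "b < n2"
        hence "a*n2 + b < a*n2 + n2" by simp
        also have "\<dots> = Suc a * n2" by simp
        also have "\<dots> \<le> n1 * n2" using \<open>a < n1\<close> by (intro mult_right_mono) auto
        finally show "a*n2+b < n1*n2" .
      qed
      show "{..<n1*n2} \<subseteq> (\<lambda>(a,b). a*n2+b) ` ({..<n1} \<times> {..<n2})"
      proof clarsimp
        fix l assume l: "l < n1*n2"
        have "l = (l div n2)*n2 + l mod n2" by simp
        moreover have "l div n2 < n1" using l assms by (simp add: less_mult_imp_div_less)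
        moreover have "l mod n2 < n2" using assms by simp
        ultimately show "l \<in> (\<lambda>(a,b). a*n2+b) ` ({..<n1} \<times> {..<n2})"
          by (intro image_eqI[of _ _ "(l div n2, l mod n2)"]) auto
      qed
    qed
  qed
  have "(\<Sum>l<n1*n2. f (l div n2) (l mod n2)) = (\<Sum>(a,b)\<in>{..<n1} \<times> {..<n2}. f ((a*n2+b) div n2) ((a*n2+b) mod n2))"
    using sum.reindex_bij_betw[OF bij, of "\<lambda>l. f (l div n2) (l mod n2)"] by (simp add: case_prod_unfold)
  also have "\<dots> = (\<Sum>(a,b)\<in>{..<n1} \<times> {..<n2}. f a b)"
    using assms by (intro sum.cong) auto
  also have "\<dots> = (\<Sum>a<n1. \<Sum>b<n2. f a b)"
    by (simp add: sum.cartesian_product)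
  finally show ?thesis .
qed

lemma alg_int_poly_deg:
  fixes x :: real
  assumes "algebraic_int x"
  obtains p m where "lead_coeff p = 1" "poly (map_poly of_int p) x = 0" "degree p = Suc m"
proof -
  from assms obtain p where p: "poly (map_poly of_int p) x = 0" "lead_coeff p = 1"
    unfolding algebraic_int_altdef_ipoly by blast
  have "degree p \<noteq> 0"
  proof
    assume "degree p = 0"
    hence "p = [:1:]" using p(2) degree_0_id[of p] by simp
    thus False using p(1) by simp
  qed
  then obtain m where "degree p = Suc m" using not0_implies_Suc by blast
  thus ?thesis using that p by blast
qed

lemma algebraic_int_times_real:
  fixes x y :: real
  assumes "algebraic_int x" "algebraic_int y"
  shows "algebraic_int (x * y)"
proof -
  obtain p m1 where p: "lead_coeff p = 1" "poly (map_poly of_int p) x = 0" "degree p = Suc m1"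
    using alg_int_poly_deg[OF assms(1)] by blast
  obtain q m2 where q: "lead_coeff q = 1" "poly (map_poly of_int q) y = 0" "degree q = Suc m2"
    using alg_int_poly_deg[OF assms(2)] by blast
  define n1 where "n1 = Suc m1"
  define n2 where "n2 = Suc m2"
  have "\<forall>k. \<exists>c::nat \<Rightarrow> int. x^k = (\<Sum>a<n1. of_int (c a) * x^a)"
    using pow_reduce[OF p] unfolding n1_def by blast
  then obtain C where C: "\<And>k. x^k = (\<Sum>a<n1. of_int (C k a) * x^a)" by metis
  have "\<forall>k. \<exists>c::nat \<Rightarrow> int. y^k = (\<Sum>a<n2. of_int (c a) * y^a)"
    using pow_reduce[OF q] unfolding n2_def by blast
  then obtain D where D: "\<And>k. y^k = (\<Sum>a<n2. of_int (D k a) * y^a)" by metis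
  define N where "N = n1 * n2"
  define v :: "real vec" where "v = vec N (\<lambda>l. x^(l div n2) * y^(l mod n2))"
  define A :: "int mat" where "A = mat N N (\<lambda>(k,l). C (Suc (k div n2)) (l div n2) * D (Suc (k mod n2)) (l mod n2))"
  have n2: "n2 > 0" unfolding n2_def by simp
  have N0: "0 < N" unfolding N_def n1_def n2_def by simp
  have A: "A \<in> carrier_mat N N" unfolding A_def by simp
  have vc: "v \<in> carrier_vec N" unfolding v_def by simp
  have vnz: "v \<noteq> 0\<^sub>v N"
  proof
    assume "v = 0\<^sub>v N"
    hence "v $ 0 = 0" using N0 by simp
    thus False unfolding v_def using N0 by simp
  qed
  have ev: "map_mat of_int A *\<^sub>v v = (x*y) \<cdot>\<^sub>v v"
  proof (rule eq_vecI)
    show "dim_vec (map_mat of_int A *\<^sub>v v) = dim_vec ((x*y) \<cdot>\<^sub>v v)" using A vc by simp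
    fix k assume "k < dim_vec ((x*y) \<cdot>\<^sub>v v)"
    hence k: "k < N" using vc by simp
    have "(map_mat of_int A *\<^sub>v v) $ k = (\<Sum>l<N. of_int (A $$ (k,l)) * v $ l)"
      using A vc k by (simp add: scalar_prod_def atLeast0LessThan)
    also have "\<dots> = (\<Sum>l<n1*n2. (\<lambda>a b. of_int (C (Suc (k div n2)) a) * x^a * (of_int (D (Suc (k mod n2)) b) * y^b)) (l div n2) (l mod n2))"
      unfolding N_def
    proof (intro sum.cong refl)
      fix l assume "l \<in> {..<n1*n2}"
      hence l: "l < N" unfolding N_def by simp
      have "A $$ (k,l) = C (Suc (k div n2)) (l div n2) * D (Suc (k mod n2)) (l mod n2)"
        unfolding A_def using k l by simp
      moreover have "v $ l = x^(l div n2) * y^(l mod n2)" unfolding v_def using l by simp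
      ultimately show "of_int (A $$ (k,l)) * v $ l = (\<lambda>a b. of_int (C (Suc (k div n2)) a) * x^a * (of_int (D (Suc (k mod n2)) b) * y^b)) (l div n2) (l mod n2)"
        by (simp add: mult_ac)
    qed
    also have "\<dots> = (\<Sum>a<n1. \<Sum>b<n2. of_int (C (Suc (k div n2)) a) * x^a * (of_int (D (Suc (k mod n2)) b) * y^b))"
      by (rule sum_div_mod[OF n2])
    also have "\<dots> = x^(Suc (k div n2)) * y^(Suc (k mod n2))"
      unfolding C[of "Suc (k div n2)"] D[of "Suc (k mod n2)"] by (simp add: sum_product)
    also have "\<dots> = ((x*y) \<cdot>\<^sub>v v) $ k"
      using k by (simp add: v_def)
    finally show "(map_mat of_int A *\<^sub>v v) $ k = ((x*y) \<cdot>\<^sub>v v) $ k" .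
  qed
  show ?thesis by (rule eig_alg_int[OF A vc vnz ev])
qed



lemma sqrt_int_in_Rats:
  fixes D :: int
  assumes "D \<ge> 0" "sqrt (of_int D) \<in> \<rat>"
  obtains k where "D = k * k"
proof -
  have "algebraic_int (sqrt (of_int D :: real))" by (intro algebraic_int_sqrt) simp
  hence "sqrt (of_int D :: real) \<in> \<int>" using assms(2) rational_algebraic_int_is_int by blast
  then obtain k where k: "sqrt (of_int D :: real) = of_int k" by (elim Ints_cases)
  have "(of_int D :: real) = (sqrt (of_int D))^2" using assms(1) by simp
  also have "\<dots> = of_int k * of_int k" using k by (simp add: power2_eq_square)
  finally have "(of_int D :: real) = of_int k * of_int k" .
  hence "D = k * k" by (metis of_int_eq_iff of_int_mult)
  thus ?thesis using that by blast
qed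

lemma sqrt_irr:
  fixes D :: int
  assumes "squarefree D" "D > 1"
  shows "sqrt (of_int D) \<notin> \<rat>"
proof
  assume "sqrt (of_int D) \<in> \<rat>"
  moreover have "D \<ge> 0" using assms(2) by simp
  ultimately obtain k where k: "D = k * k" using sqrt_int_in_Rats by blast
  hence "k ^ 2 dvd D" by (simp add: power2_eq_square)
  hence "k dvd 1" using assms(1) unfolding squarefree_def by blast
  hence "\<bar>k\<bar> = 1" by simp
  hence "k * k = 1" by (metis abs_mult_self_eq mult_1)
  thus False using k assms(2) by simp
qed

lemma sqrt_prod_irr:
  fixes D1 D2 :: int
  assumes "real_biquadratic D1 D2"
  shows "sqrt (of_int D1) * sqrt (of_int D2) \<notin> \<rat>"
proof
  assume a: "sqrt (of_int D1) * sqrt (of_int D2) \<in> \<rat>"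
  from assms have D: "D1 > 1" "D2 > 1" "squarefree D1" "squarefree D2" "D1 \<noteq> D2"
    unfolding real_biquadratic_def by auto
  have "sqrt (of_int (D1 * D2)) \<in> \<rat>" using a by (simp add: real_sqrt_mult)
  then obtain k where k: "D1 * D2 = k * k" using sqrt_int_in_Rats[of "D1*D2"] D by force
  have k0: "k \<noteq> 0" using k D by auto
  have "multiplicity p D1 = multiplicity p D2" if p: "prime p" for p
  proof -
    have m1: "multiplicity p D1 \<le> 1" using D(3) D(1) p squarefree_factorial_semiring''[of D1] by simp
    have m2: "multiplicity p D2 \<le> 1" using D(4) D(2) p squarefree_factorial_semiring''[of D2] by simp
    have "multiplicity p D1 + multiplicity p D2 = multiplicity p k + multiplicity p k"
      using prime_elem_multiplicity_mult_distrib[of p D1 D2] prime_elem_multiplicity_mult_distrib[of p k k]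
        p D k k0 prime_gt_0_int[OF p] by simp
    thus ?thesis using m1 m2 by presburger
  qed
  hence "normalize D1 = normalize D2" using D by (intro multiplicity_eq_imp_eq) auto
  hence "D1 = D2" using D by simp
  thus False using D by simp
qed

lemma lin_indep_aux:
  fixes x y a b c d :: real
  assumes x: "x \<notin> \<rat>" and y: "y \<notin> \<rat>" and xy: "x * y \<notin> \<rat>"
    and X: "x * x \<in> \<rat>" and Y: "y * y \<in> \<rat>"
    and r: "a \<in> \<rat>" "b \<in> \<rat>" "c \<in> \<rat>" "d \<in> \<rat>"
    and eq: "a + b * x + c * y + d * x * y = 0"
  shows "a = 0 \<and> b = 0 \<and> c = 0 \<and> d = 0"
proof (cases "c + d * x = 0")
  case True
  have d0: "d = 0"
  proof (rule ccontr)
    assume "d \<noteq> 0"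
    hence "x = - c / d" using True by (simp add: field_simps)
    thus False using x r by simp
  qed
  hence c0: "c = 0" using True by simp
  have "a + b * x = 0" using eq d0 c0 by simp
  have b0: "b = 0"
  proof (rule ccontr)
    assume "b \<noteq> 0"
    hence "x = - a / b" using \<open>a + b * x = 0\<close> by (simp add: field_simps)
    thus False using x r by simp
  qed
  thus ?thesis using \<open>a + b * x = 0\<close> c0 d0 by simp
next
  case False
  define X0 where "X0 = x * x"
  have N0: "c * c - d * d * X0 \<noteq> 0"
  proof
    assume h: "c * c - d * d * X0 = 0"
    have "(c + d * x) * (c - d * x) = 0" using h unfolding X0_def by (simp add: algebra_simps)
    hence cdx: "c = d * x" using False by simp
    show False
    proof (cases "d = 0")
      case True
      thus False using cdx False by simp
    next
      case False
      hence "x = c / d" using cdx by (simp add: field_simps)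
      thus False using x r by simp
    qed
  qed
  define u where "u = - (a * c - b * d * X0) / (c * c - d * d * X0)"
  define w where "w = - (b * c - a * d) / (c * c - d * d * X0)"
  have u: "u \<in> \<rat>" and w: "w \<in> \<rat>" unfolding u_def w_def X0_def using r X by auto
  have "y * (c + d * x) = - (a + b * x)" using eq by (simp add: algebra_simps)
  hence "y * (c + d * x) * (c - d * x) = - (a + b * x) * (c - d * x)" by simp
  hence "y * (c * c - d * d * X0) = - ((a * c - b * d * X0) + (b * c - a * d) * x)"
    unfolding X0_def by (simp add: algebra_simps)
  hence "y = - ((a * c - b * d * X0) + (b * c - a * d) * x) / (c * c - d * d * X0)"
    using N0 by (simp add: eq_divide_eq)
  also have "\<dots> = u + w * x" unfolding u_def w_def
    using N0 by (simp add: add_divide_distrib diff_divide_distrib algebra_simps)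
  finally have yuw: "y = u + w * x" .
  hence "y * y = u * u + w * w * X0 + 2 * u * w * x" unfolding X0_def by (simp add: algebra_simps)
  hence e2: "2 * u * w * x = y * y - u * u - w * w * X0" by simp
  have "u * w = 0"
  proof (rule ccontr)
    assume "u * w \<noteq> 0"
    hence "x = (y * y - u * u - w * w * X0) / (2 * u * w)" using e2 by (simp add: field_simps)
    moreover have "(y * y - u * u - w * w * X0) / (2 * u * w) \<in> \<rat>" using u w X Y unfolding X0_def by auto
    ultimately show False using x by simp
  qed
  hence "u = 0 \<or> w = 0" by simp
  thus ?thesis
  proof
    assume "u = 0"
    hence "x * y = w * X0" using yuw unfolding X0_def by (simp add: algebra_simps)
    moreover have "w * X0 \<in> \<rat>" using w X unfolding X0_def by simp
    ultimately show ?thesis using xy by simp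
  next
    assume "w = 0"
    hence "y = u" using yuw by simp
    thus ?thesis using y u by simp
  qed
qed

lemma emb_TT_inj:
  assumes "real_biquadratic D1 D2" "bq_emb D1 D2 (True, True) z = 0"
  shows "z = (0, 0, 0, 0)"
proof -
  obtain a b c d where z: "z = (a, b, c, d)" by (cases z) auto
  from assms(1) have D: "D1 > 1" "D2 > 1" "squarefree D1" "squarefree D2"
    unfolding real_biquadratic_def by auto
  let ?x = "sqrt (of_int D1) :: real" and ?y = "sqrt (of_int D2) :: real"
  have "(of_rat a :: real) = 0 \<and> (of_rat b :: real) = 0 \<and> (of_rat c :: real) = 0 \<and> (of_rat d :: real) = 0"
  proof (rule lin_indep_aux[of ?x ?y])
    show "?x \<notin> \<rat>" using sqrt_irr D by auto
    show "?y \<notin> \<rat>" using sqrt_irr D by auto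
    show "?x * ?y \<notin> \<rat>" using sqrt_prod_irr assms(1) by auto
    show "?x * ?x \<in> \<rat>" using D by simp
    show "?y * ?y \<in> \<rat>" using D by simp
    show "of_rat a + of_rat b * ?x + of_rat c * ?y + of_rat d * ?x * ?y = 0"
      using assms(2) unfolding z bq_emb_def sg_def by simp
  qed auto
  thus ?thesis using z by simp
qed



definition bmul :: "int \<Rightarrow> int \<Rightarrow> rat \<times> rat \<times> rat \<times> rat \<Rightarrow> rat \<times> rat \<times> rat \<times> rat \<Rightarrow> rat \<times> rat \<times> rat \<times> rat" where
  "bmul D1 D2 q r = (case q of (a, b, c, d) \<Rightarrow> case r of (e, f, g, h) \<Rightarrow>
     (a*e + b*f*of_int D1 + c*g*of_int D2 + d*h*of_int D1*of_int D2,
      a*f + b*e + (c*h + d*g)*of_int D2,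
      a*g + c*e + (b*h + d*f)*of_int D1,
      a*h + d*e + b*g + c*f))"

lemma mul_gen:
  fixes x y a b c d e f g h :: real
  shows "(a + sg s*b*x + sg t*c*y + sg s*sg t*d*x*y) * (e + sg s*f*x + sg t*g*y + sg s*sg t*h*x*y) =
    (a*e + b*f*(x*x) + c*g*(y*y) + d*h*(x*x)*(y*y)) + sg s*(a*f + b*e + (c*h + d*g)*(y*y))*x
    + sg t*(a*g + c*e + (b*h + d*f)*(x*x))*y + sg s*sg t*(a*h + d*e + b*g + c*f)*x*y"
  by (cases s; cases t) (simp_all add: sg_def algebra_simps)

lemma sg_sq: "sg s * sg s = 1" by (cases s) (simp_all add: sg_def)

lemma emb_mul:
  assumes "D1 \<ge> 0" "D2 \<ge> 0"
  shows "bq_emb D1 D2 st (bmul D1 D2 q r) = bq_emb D1 D2 st q * bq_emb D1 D2 st r"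
proof -
  obtain a b c d where q: "q = (a,b,c,d)" by (cases q) auto
  obtain e f g h where r: "r = (e,f,g,h)" by (cases r) auto
  have x: "sqrt (of_int D1) * sqrt (of_int D1) = (of_int D1 :: real)" using assms by simp
  have y: "sqrt (of_int D2) * sqrt (of_int D2) = (of_int D2 :: real)" using assms by simp
  show ?thesis
    unfolding q r bmul_def bq_emb_def
    using assms by (simp add: mul_gen x y of_rat_add of_rat_mult)
qed

lemma emb_cadd:
  "bq_emb D1 D2 st (r + e, f, g, h) = of_rat r + bq_emb D1 D2 st (e, f, g, h)"
  unfolding bq_emb_def by (simp add: of_rat_add)

lemma emb_const: "bq_emb D1 D2 st (r, 0, 0, 0) = of_rat r"
  unfolding bq_emb_def by simp

definition bconj :: "bool \<times> bool \<Rightarrow> rat \<times> rat \<times> rat \<times> rat \<Rightarrow> rat \<times> rat \<times> rat \<times> rat" where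
  "bconj u q = (case q of (a, b, c, d) \<Rightarrow>
     (a, if fst u then b else -b, if snd u then c else -c, if fst u = snd u then d else -d))"

lemma emb_conj:
  "bq_emb D1 D2 st (bconj u q) = bq_emb D1 D2 (fst st = fst u, snd st = snd u) q"
proof -
  obtain a b c d where q: "q = (a,b,c,d)" by (cases q) auto
  obtain s t where st: "st = (s,t)" by (cases st) auto
  obtain s' t' where u: "u = (s',t')" by (cases u) auto
  show ?thesis unfolding q st u bconj_def bq_emb_def sg_def
    by (cases s; cases t; cases s'; cases t') (simp_all add: of_rat_minus)
qed

lemma poly_transfer:
  fixes p :: "real poly"
  assumes "\<forall>i. coeff p i \<in> \<rat>" "D1 \<ge> 0" "D2 \<ge> 0"
  shows "\<exists>z. \<forall>st. poly p (bq_emb D1 D2 st q) = bq_emb D1 D2 st z"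
  using assms(1)
proof (induction p)
  case (pCons a p)
  have "a \<in> \<rat>" using pCons.prems[rule_format, of 0] by simp
  then obtain r where r: "a = of_rat r" by (elim Rats_cases) 
  have "\<forall>i. coeff p i \<in> \<rat>" using pCons.prems[rule_format, of "Suc i" for i] by simp
  then obtain z where z: "\<And>st. poly p (bq_emb D1 D2 st q) = bq_emb D1 D2 st z" using pCons.IH by blast
  obtain e f g h where ez: "bmul D1 D2 q z = (e,f,g,h)" by (cases "bmul D1 D2 q z") auto
  have "poly (pCons a p) (bq_emb D1 D2 st q) = bq_emb D1 D2 st (r + e, f, g, h)" for st
    using emb_mul[OF assms(2,3), of st q z] unfolding emb_cadd ez[symmetric] by (simp add: z r)
  thus ?case by blast
next
  case 0
  show ?case by (rule exI[of _ "(0,0,0,0)"]) (simp add: emb_const)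
qed

lemma emb_zero_iff:
  assumes "real_biquadratic D1 D2"
  shows "bq_emb D1 D2 st z = 0 \<longleftrightarrow> z = (0,0,0,0)"
proof
  assume "bq_emb D1 D2 st z = 0"
  hence "bq_emb D1 D2 (True, True) (bconj st z) = 0" by (simp add: emb_conj)
  hence "bconj st z = (0,0,0,0)" using emb_TT_inj[OF assms] by blast
  thus "z = (0,0,0,0)" unfolding bconj_def by (cases z) (auto split: if_splits)
next
  assume "z = (0,0,0,0)" thus "bq_emb D1 D2 st z = 0" by (simp add: emb_const)
qed

lemma root_transfer:
  fixes p :: "real poly"
  assumes bq: "real_biquadratic D1 D2" and "\<forall>i. coeff p i \<in> \<rat>"
    and "poly p (bq_emb D1 D2 st0 q) = 0"
  shows "poly p (bq_emb D1 D2 st q) = 0"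
proof -
  have D: "D1 \<ge> 0" "D2 \<ge> 0" using bq unfolding real_biquadratic_def by auto
  obtain z where z: "\<And>st. poly p (bq_emb D1 D2 st q) = bq_emb D1 D2 st z"
    using poly_transfer[OF assms(2) D] by blast
  have "z = (0,0,0,0)" using assms(3) z emb_zero_iff[OF bq] by metis
  thus ?thesis using z emb_zero_iff[OF bq] by metis
qed

lemma unit_emb:
  assumes bq: "real_biquadratic D1 D2" and u: "bq_unit D1 D2 q"
  shows "bq_emb D1 D2 st q \<noteq> 0 \<and> algebraic_int (bq_emb D1 D2 st q) \<and> algebraic_int (inverse (bq_emb D1 D2 st q))"
proof -
  let ?x = "bq_emb D1 D2 (True, True) q" and ?y = "bq_emb D1 D2 st q"
  have x: "?x \<noteq> 0" "algebraic_int ?x" "algebraic_int (inverse ?x)"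
    using u unfolding bq_unit_def Let_def by auto
  have y0: "?y \<noteq> 0" using x(1) emb_zero_iff[OF bq] by metis
  have QZ: "\<And>p i. (\<forall>i. coeff p i \<in> \<int>) \<Longrightarrow> coeff (p::real poly) i \<in> \<rat>"
    using Ints_subset_Rats by blast
  from x(2) obtain p where p: "lead_coeff p = 1" "\<forall>i. coeff p i \<in> \<int>" "poly p ?x = 0"
    by (auto simp: algebraic_int.simps)
  have "poly p ?y = 0" using root_transfer[OF bq _ p(3)] QZ[OF p(2)] by blast
  hence ay: "algebraic_int ?y" using p by (intro algebraic_int.intros) auto
  from x(3) obtain p' where p': "lead_coeff p' = 1" "\<forall>i. coeff p' i \<in> \<int>" "poly p' (inverse ?x) = 0"
    by (auto simp: algebraic_int.simps)
  have "poly (reflect_poly p') ?x = 0" using poly_reflect_poly_nz[OF x(1), of p'] p'(3) by simp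
  moreover have "\<forall>i. coeff (reflect_poly p') i \<in> \<rat>"
    using QZ[OF p'(2)] by (simp add: coeff_reflect_poly)
  ultimately have "poly (reflect_poly p') ?y = 0" using root_transfer[OF bq] by blast
  hence "poly p' (inverse ?y) = 0" using poly_reflect_poly_nz[OF y0, of p'] y0 by simp
  hence "algebraic_int (inverse ?y)" using p' by (intro algebraic_int.intros) auto
  thus ?thesis using y0 ay by blast
qed



lemma UNIV_bb: "(UNIV :: (bool \<times> bool) set) = {(True,True),(True,False),(False,True),(False,False)}"
  by auto

lemma norm_expand: "bq_norm D1 D2 q = bq_emb D1 D2 (True,True) q * bq_emb D1 D2 (True,False) q *
    bq_emb D1 D2 (False,True) q * bq_emb D1 D2 (False,False) q"
  unfolding bq_norm_def UNIV_bb by (simp add: mult.assoc)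

lemma norm4:
  fixes a b c d x y :: real
  shows "(a + b*x + c*y + d*x*y) * (a + b*x - c*y - d*x*y) * (a - b*x + c*y - d*x*y) * (a - b*x - c*y + d*x*y)
    = (a*a + c*c*(y*y) - b*b*(x*x) - d*d*(x*x)*(y*y))^2 - (2*a*c - 2*b*d*(x*x))^2 * (y*y)"
  by (simp add: algebra_simps power2_eq_square)

lemma norm_rat:
  assumes "real_biquadratic D1 D2"
  shows "bq_norm D1 D2 q \<in> \<rat>"
proof -
  obtain a b c d where q: "q = (a,b,c,d)" by (cases q) auto
  have D: "D1 \<ge> 0" "D2 \<ge> 0" using assms unfolding real_biquadratic_def by auto
  let ?x = "sqrt (of_int D1) :: real" and ?y = "sqrt (of_int D2) :: real"
  have xx: "?x * ?x = of_int D1" and yy: "?y * ?y = of_int D2" using D by simp_all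
  have "bq_norm D1 D2 q = (of_rat a + of_rat b * ?x + of_rat c * ?y + of_rat d * ?x * ?y) *
     (of_rat a + of_rat b * ?x - of_rat c * ?y - of_rat d * ?x * ?y) *
     (of_rat a - of_rat b * ?x + of_rat c * ?y - of_rat d * ?x * ?y) *
     (of_rat a - of_rat b * ?x - of_rat c * ?y + of_rat d * ?x * ?y)"
    unfolding norm_expand q bq_emb_def sg_def by (simp add: algebra_simps)
  also have "\<dots> = (of_rat a*of_rat a + of_rat c*of_rat c*(?y*?y) - of_rat b*of_rat b*(?x*?x) - of_rat d*of_rat d*(?x*?x)*(?y*?y))^2
      - (2*of_rat a*of_rat c - 2*of_rat b*of_rat d*(?x*?x))^2 * (?y*?y)"
    by (rule norm4)
  also have "\<dots> \<in> \<rat>" unfolding xx yy by simp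
  finally show ?thesis .
qed

lemma norm_pm1:
  assumes bq: "real_biquadratic D1 D2" and u: "bq_unit D1 D2 q"
  shows "bq_norm D1 D2 q = 1 \<or> bq_norm D1 D2 q = -1"
proof -
  let ?e = "\<lambda>st. bq_emb D1 D2 st q"
  have e: "\<And>st. ?e st \<noteq> 0 \<and> algebraic_int (?e st) \<and> algebraic_int (inverse (?e st))"
    using unit_emb[OF bq u] by blast
  have N: "bq_norm D1 D2 q = ?e (True,True) * ?e (True,False) * ?e (False,True) * ?e (False,False)"
    by (rule norm_expand)
  have "algebraic_int (bq_norm D1 D2 q)" unfolding N using e
    by (intro algebraic_int_times_real) auto
  hence "bq_norm D1 D2 q \<in> \<int>" using norm_rat[OF bq] rational_algebraic_int_is_int by blast
  then obtain m where m: "bq_norm D1 D2 q = of_int m" by (elim Ints_cases)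
  have iN: "inverse (bq_norm D1 D2 q) = inverse (?e (True,True)) * inverse (?e (True,False)) * inverse (?e (False,True)) * inverse (?e (False,False))"
    unfolding N by (simp add: inverse_mult_distrib)
  have "algebraic_int (inverse (bq_norm D1 D2 q))" unfolding iN using e
    by (intro algebraic_int_times_real) auto
  moreover have "inverse (bq_norm D1 D2 q) \<in> \<rat>" using norm_rat[OF bq] by simp
  ultimately have "inverse (bq_norm D1 D2 q) \<in> \<int>" using rational_algebraic_int_is_int by blast
  then obtain k where k: "inverse (bq_norm D1 D2 q) = of_int k" by (elim Ints_cases)
  have "bq_norm D1 D2 q \<noteq> 0" unfolding N using e by simp
  hence "bq_norm D1 D2 q * inverse (bq_norm D1 D2 q) = 1" by simp
  moreover have k': "inverse (of_int m :: real) = of_int k" using k m by simp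
  ultimately have "of_int (m * k) = (1 :: real)" by (simp only: m k' of_int_mult)
  hence "m * k = 1" by (metis of_int_eq_1_iff)
  hence "m = 1 \<or> m = -1" using zmult_eq_1_iff by blast
  thus ?thesis using m by auto
qed



lemma unit_mul:
  assumes bq: "real_biquadratic D1 D2" and u: "bq_unit D1 D2 q" "bq_unit D1 D2 r"
  shows "bq_unit D1 D2 (bmul D1 D2 q r) \<and> bq_sgn D1 D2 (bmul D1 D2 q r) = (\<lambda>st. bq_sgn D1 D2 q st \<noteq> bq_sgn D1 D2 r st)"
proof -
  have D: "D1 \<ge> 0" "D2 \<ge> 0" using bq unfolding real_biquadratic_def by auto
  note eq = emb_mul[OF D]
  have eq_: "\<And>st. bq_emb D1 D2 st q \<noteq> 0 \<and> algebraic_int (bq_emb D1 D2 st q) \<and> algebraic_int (inverse (bq_emb D1 D2 st q))"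
    using unit_emb[OF bq u(1)] by blast
  have er: "\<And>st. bq_emb D1 D2 st r \<noteq> 0 \<and> algebraic_int (bq_emb D1 D2 st r) \<and> algebraic_int (inverse (bq_emb D1 D2 st r))"
    using unit_emb[OF bq u(2)] by blast
  have "bq_unit D1 D2 (bmul D1 D2 q r)"
    unfolding bq_unit_def Let_def eq using eq_[of "(True,True)"] er[of "(True,True)"]
    by (auto simp: inverse_mult_distrib intro!: algebraic_int_times_real)
  moreover have "bq_sgn D1 D2 (bmul D1 D2 q r) = (\<lambda>st. bq_sgn D1 D2 q st \<noteq> bq_sgn D1 D2 r st)"
  proof
    fix st
    have "bq_emb D1 D2 st q \<noteq> 0" "bq_emb D1 D2 st r \<noteq> 0" using eq_ er by auto
    thus "bq_sgn D1 D2 (bmul D1 D2 q r) st = (bq_sgn D1 D2 q st \<noteq> bq_sgn D1 D2 r st)"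
      unfolding bq_sgn_def eq by (auto simp: mult_less_0_iff)
  qed
  ultimately show ?thesis by blast
qed

lemma unit_conj:
  assumes bq: "real_biquadratic D1 D2" and u: "bq_unit D1 D2 q"
  shows "bq_unit D1 D2 (bconj w q) \<and> bq_sgn D1 D2 (bconj w q) = (\<lambda>st. bq_sgn D1 D2 q (fst st = fst w, snd st = snd w))"
proof -
  have "bq_emb D1 D2 (True, True) (bconj w q) = bq_emb D1 D2 w q" by (simp add: emb_conj)
  hence "bq_unit D1 D2 (bconj w q)" unfolding bq_unit_def Let_def using unit_emb[OF bq u, of w] by simp
  moreover have "bq_sgn D1 D2 (bconj w q) = (\<lambda>st. bq_sgn D1 D2 q (fst st = fst w, snd st = snd w))"
    unfolding bq_sgn_def by (simp add: emb_conj)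
  ultimately show ?thesis by blast
qed

lemma unit_m1:
  shows "bq_unit D1 D2 (-1, 0, 0, 0) \<and> bq_sgn D1 D2 (-1, 0, 0, 0) = (\<lambda>_. True)"
  unfolding bq_unit_def bq_sgn_def by (simp add: emb_const)



lemma comb:
  fixes G :: "(bool \<times> bool \<Rightarrow> bool) set"
  assumes xor: "\<And>f g. f \<in> G \<Longrightarrow> g \<in> G \<Longrightarrow> (\<lambda>st. f st \<noteq> g st) \<in> G"
    and sh: "\<And>f w. f \<in> G \<Longrightarrow> (\<lambda>st. f (fst st = fst w, snd st = snd w)) \<in> G"
    and ones: "(\<lambda>_. True) \<in> G" and v: "v \<in> G"
    and par: "v (True,True) \<noteq> (v (True,False) \<noteq> (v (False,True) \<noteq> v (False,False)))"
  shows "G = UNIV"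
proof -
  have "\<exists>k. v = (\<lambda>st. st = k) \<or> v = (\<lambda>st. st \<noteq> k)"
    using par by (auto simp: fun_eq_iff split_paired_Ex ex_bool_eq split_paired_All all_bool_eq)
  then obtain k where k: "v = (\<lambda>st. st = k) \<or> v = (\<lambda>st. st \<noteq> k)" by blast
  have ek: "(\<lambda>st. st = k) \<in> G"
    using k
  proof
    assume "v = (\<lambda>st. st \<noteq> k)"
    hence "(\<lambda>st. st = k) = (\<lambda>st. v st \<noteq> True)" by auto
    thus ?thesis using xor[OF v ones] by simp
  qed (use v in simp)
  have ej: "(\<lambda>st. st = j) \<in> G" for j
  proof -
    have "(\<lambda>st. st = j) = (\<lambda>st. (fst st = (fst j = fst k), snd st = (snd j = snd k)) = k)"
      by (auto simp: fun_eq_iff prod_eq_iff)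
    thus ?thesis using sh[OF ek, of "(fst j = fst k, snd j = snd k)"] by simp
  qed
  have zero: "(\<lambda>_. False) \<in> G" using xor[OF v v] by simp
  have h: "(if f j then (\<lambda>st. st = j) else (\<lambda>_. False)) \<in> G" for f j
    using ej zero by simp
  have all: "f \<in> G" for f :: "bool \<times> bool \<Rightarrow> bool"
  proof -
    let ?h = "\<lambda>j. if f j then (\<lambda>st. st = j) else (\<lambda>_. False)"
    have "f = (\<lambda>st. ?h (True,True) st \<noteq> ((\<lambda>st. ?h (True,False) st \<noteq> ((\<lambda>st. ?h (False,True) st \<noteq> ?h (False,False) st) st)) st))"
      by (simp only: fun_eq_iff split_paired_All all_bool_eq) simp
    moreover have "(\<lambda>st. ?h (True,True) st \<noteq> ((\<lambda>st. ?h (True,False) st \<noteq> ((\<lambda>st. ?h (False,True) st \<noteq> ?h (False,False) st) st)) st)) \<in> G"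
      by (intro xor h)
    ultimately show "f \<in> G" by simp
  qed
  show ?thesis using all by blast
qed



lemma span_UNIV: "f2_span (UNIV :: ('i::finite \<Rightarrow> bool) set) = UNIV"
proof -
  have "f \<in> f2_span UNIV" for f :: "'i \<Rightarrow> bool"
  proof -
    have c: "{v\<in>{f}. v i} = (if f i then {f} else {})" for i by auto
    have eq: "f = (\<lambda>i. odd (card {v\<in>{f}. v i}))"
      unfolding c by (rule ext) simp
    show ?thesis unfolding f2_span_def mem_Collect_eq
      by (rule exI[of _ "{f}"]) (use eq in simp)
  qed
  thus ?thesis by blast
qed

lemma dim_UNIV: "f2_dim (UNIV :: (bool \<times> bool \<Rightarrow> bool) set) \<ge> 4"
proof -
  let ?P = "\<lambda>n. \<exists>S. finite S \<and> card S = n \<and> f2_span S = (UNIV :: (bool \<times> bool \<Rightarrow> bool) set)"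
  have "?P (card (UNIV :: (bool \<times> bool \<Rightarrow> bool) set))" by (rule exI[of _ UNIV]) (simp add: span_UNIV)
  hence "?P (Least ?P)" by (rule LeastI)
  then obtain S :: "(bool \<times> bool \<Rightarrow> bool) set" where S: "finite S" "card S = Least ?P" "f2_span S = UNIV" by blast
  have im: "f2_span S = (\<lambda>T. \<lambda>i. odd (card {v\<in>T. v i})) ` Pow S"
    unfolding f2_span_def using S(1) by (auto intro: finite_subset)
  have "card (f2_span S) \<le> card (Pow S)"
    unfolding im using S(1) by (intro card_image_le) simp
  hence "card (UNIV :: (bool \<times> bool \<Rightarrow> bool) set) \<le> card (Pow S)"
    unfolding S(3) .
  moreover have "card (UNIV :: (bool \<times> bool \<Rightarrow> bool) set) = 16"
    by (simp add: card_fun)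
  ultimately have c16: "16 \<le> (2::nat) ^ card S" using S(1) by (simp add: card_Pow)
  have "card S \<ge> 4"
  proof (rule ccontr)
    assume "\<not> card S \<ge> 4"
    hence "(2::nat) ^ card S \<le> 2 ^ 3" by (intro power_increasing) auto
    thus False using c16 by simp
  qed
  thus ?thesis unfolding f2_dim_def using S(2) by simp
qed



lemma sign2: "(a::real) \<noteq> 0 \<Longrightarrow> b \<noteq> 0 \<Longrightarrow> (a * b < 0) = ((a < 0) \<noteq> (b < 0))"
  by (auto simp: mult_less_0_iff)

theorem lemma3p2:
  fixes D1 D2 :: int and \<eta> :: "rat \<times> rat \<times> rat \<times> rat"
  assumes "real_biquadratic D1 D2"
    and "sgnrk D1 D2 \<le> 3"
    and "bq_unit D1 D2 \<eta>"
  shows "bq_norm D1 D2 \<eta> = 1"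
proof (rule ccontr)
  assume ne: "bq_norm D1 D2 \<eta> \<noteq> 1"
  hence N: "bq_norm D1 D2 \<eta> = -1" using norm_pm1[OF assms(1,3)] by blast
  let ?G = "unit_sgn_group D1 D2"
  let ?e = "\<lambda>st. bq_emb D1 D2 st \<eta>"
  have e0: "\<And>st. ?e st \<noteq> 0" using unit_emb[OF assms(1,3)] by blast
  have "?e (True,True) * ?e (True,False) * ?e (False,True) * ?e (False,False) < 0"
    using N norm_expand[of D1 D2 \<eta>] by simp
  hence par: "bq_sgn D1 D2 \<eta> (True,True) \<noteq> (bq_sgn D1 D2 \<eta> (True,False) \<noteq> (bq_sgn D1 D2 \<eta> (False,True) \<noteq> bq_sgn D1 D2 \<eta> (False,False)))"
    unfolding bq_sgn_def using e0[of "(True,True)"] e0[of "(True,False)"] e0[of "(False,True)"] e0[of "(False,False)"]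
    using sign2[of "?e (True,True) * ?e (True,False) * ?e (False,True)" "?e (False,False)"]
      sign2[of "?e (True,True) * ?e (True,False)" "?e (False,True)"]
      sign2[of "?e (True,True)" "?e (True,False)"] e0 by (simp, argo)
  have "?G = UNIV"
  proof (rule comb[OF _ _ _ _ par])
    fix f g assume "f \<in> ?G" "g \<in> ?G"
    then obtain q r where "bq_unit D1 D2 q" "f = bq_sgn D1 D2 q" "bq_unit D1 D2 r" "g = bq_sgn D1 D2 r"
      unfolding unit_sgn_group_def by auto
    hence "bq_unit D1 D2 (bmul D1 D2 q r)" "(\<lambda>st. f st \<noteq> g st) = bq_sgn D1 D2 (bmul D1 D2 q r)"
      using unit_mul[OF assms(1), of q r] by auto
    thus "(\<lambda>st. f st \<noteq> g st) \<in> ?G"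
      unfolding unit_sgn_group_def by (intro image_eqI[of _ _ "bmul D1 D2 q r"]) auto
  next
    fix f w assume "f \<in> ?G"
    then obtain q where "bq_unit D1 D2 q" "f = bq_sgn D1 D2 q"
      unfolding unit_sgn_group_def by auto
    hence "bq_unit D1 D2 (bconj w q)" "(\<lambda>st. f (fst st = fst w, snd st = snd w)) = bq_sgn D1 D2 (bconj w q)"
      using unit_conj[OF assms(1), of q w] by auto
    thus "(\<lambda>st. f (fst st = fst w, snd st = snd w)) \<in> ?G"
      unfolding unit_sgn_group_def by (intro image_eqI[of _ _ "bconj w q"]) auto
  next
    show "(\<lambda>_. True) \<in> ?G" using unit_m1[of D1 D2]
      unfolding unit_sgn_group_def by (intro image_eqI[of _ _ "(-1,0,0,0)"]) auto
  next
    show "bq_sgn D1 D2 \<eta> \<in> ?G" using assms(3) unfolding unit_sgn_group_def by simp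
  qed
  hence "sgnrk D1 D2 \<ge> 4" unfolding sgnrk_def using dim_UNIV by simp
  thus False using assms(2) by simp
qed


end
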